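(* For all $[g],[h]\in L(4,1)$, the sub-Riemannian distance $\hat d$ on $L(4,1)$ satisfies $$\hat d([g],[h])=\min_{h_1\in[h]} d(g_1,h_1),$$ independently of the choice of $g_1\in[g]$, where $d$ is the sub-Riemannian distance on $SU(2)$.
   Context: $SU(2)$ carries the sub-Riemannian structure with distribution $\Delta(g)=g\,\mathrm{span}\{p_1,p_2\}$, where $p_1=\frac12\begin{pmatrix}0&1\\-1&0\end{pmatrix}$, $p_2=\frac12\begin{pmatrix}0&i\\i&0\end{pmatrix}$, and metric making $gp_1,gp_2$ orthonormal; $d(g,h)$ is the infimum of lengths $\int\sqrt{\mathbf{g}(\dot\gamma,\dot\gamma)}dt$ of horizontal Lipschitz curves joining $g$ to $h$. $g_1\approx g_2$ iff they admit representations $g_i=e^{-b_ip_2}e^{a_ip_1}e^{c_ip_2}$ ($a_i\in[0,\pi]$, $b_i\in[0,2\pi)$, $c_i\in\mathbb{R}/4\pi$) with equal $a$, equal $b$, and $c_1\equiv c_2\bmod\pi$. $L(4,1)=SU(2)/\!\approx$ carries the sub-Riemannian structure induced via the quotient map $\Pi$ (distribution $\Pi_*\Delta$, metric pushed forward), and $\hat d$ is its Carnot–Carathéodory distance; $[h]$ denotes the class of $h$. *)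

theory Defs
  imports "HOL-Analysis.Analysis"
begin

type_synonym cmat = "complex^2^2"

definition mat2 :: "complex \<Rightarrow> complex \<Rightarrow> complex \<Rightarrow> complex \<Rightarrow> cmat" where
  "mat2 a b c d = (\<chi> i j. if i = 1 then (if j = 1 then a else b) else (if j = 1 then c else d))"

definition adj :: "cmat \<Rightarrow> cmat" where
  "adj g = (\<chi> i j. cnj (g $ j $ i))"

definition SU2 :: "cmat set" where
  "SU2 = {g. g ** adj g = mat 1 \<and> det g = 1}"

definition p1 :: cmat where "p1 = mat2 0 (1/2) (-1/2) 0"
definition p2 :: cmat where "p2 = mat2 0 (\<i>/2) (\<i>/2) 0"

text \<open>The one-parameter subgroups exp(t p1), exp(t p2), written in closed form
  (p1^2 = p2^2 = -I/4, so exp(t p) = cos(t/2) I + 2 sin(t/2) p).\<close>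
definition exp_p1 :: "real \<Rightarrow> cmat" where
  "exp_p1 t = mat2 (cos (t/2)) (sin (t/2)) (- sin (t/2)) (cos (t/2))"
definition exp_p2 :: "real \<Rightarrow> cmat" where
  "exp_p2 t = mat2 (cos (t/2)) (\<i> * sin (t/2)) (\<i> * sin (t/2)) (cos (t/2))"

text \<open>Horizontal Lipschitz curve on [a,b] with controls u1, u2:
  gamma' t = gamma t (u1 t p1 + u2 t p2) for almost every t.  Since gamma p1, gamma p2
  are orthonormal, the speed is sqrt(u1^2+u2^2).\<close>
definition horizontal_on :: "real \<Rightarrow> real \<Rightarrow> (real \<Rightarrow> cmat) \<Rightarrow> (real \<Rightarrow> real) \<Rightarrow> (real \<Rightarrow> real) \<Rightarrow> bool" where
  "horizontal_on a b \<gamma> u1 u2 \<longleftrightarrow> a \<le> b \<and> (\<forall>t\<in>{a..b}. \<gamma> t \<in> SU2) \<and>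
     (\<exists>C. C-lipschitz_on {a..b} \<gamma>) \<and>
     (\<exists>N. N \<in> null_sets lborel \<and>
        (\<forall>t\<in>{a..b} - N. (\<gamma> has_vector_derivative (\<gamma> t ** (u1 t *\<^sub>R p1 + u2 t *\<^sub>R p2))) (at t within {a..b})))"

definition hlength :: "real \<Rightarrow> real \<Rightarrow> (real \<Rightarrow> real) \<Rightarrow> (real \<Rightarrow> real) \<Rightarrow> real" where
  "hlength a b u1 u2 = integral {a..b} (\<lambda>t. sqrt ((u1 t)\<^sup>2 + (u2 t)\<^sup>2))"

definition sr_dist :: "cmat \<Rightarrow> cmat \<Rightarrow> real" where
  "sr_dist g h = Inf {hlength 0 1 u1 u2 | \<gamma> u1 u2.
       horizontal_on 0 1 \<gamma> u1 u2 \<and> \<gamma> 0 = g \<and> \<gamma> 1 = h}"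

text \<open>The equivalence relation defining L(4,1).  c is taken in R (c mod 4 pi is irrelevant,
  since exp(4 pi p2) = I); c1 = c2 mod pi means c1 - c2 is an integer multiple of pi.\<close>
definition lens_rel :: "cmat \<Rightarrow> cmat \<Rightarrow> bool" where
  "lens_rel g1 g2 \<longleftrightarrow> (\<exists>a b c1 c2. 0 \<le> a \<and> a \<le> pi \<and> 0 \<le> b \<and> b < 2*pi \<and>
      g1 = exp_p2 (-b) ** exp_p1 a ** exp_p2 c1 \<and>
      g2 = exp_p2 (-b) ** exp_p1 a ** exp_p2 c2 \<and>
      (\<exists>k::int. c1 - c2 = of_int k * pi))"

definition cls :: "cmat \<Rightarrow> cmat set" where
  "cls g = {h \<in> SU2. lens_rel g h}"

definition L41 :: "cmat set set" where
  "L41 = cls ` SU2"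

text \<open>Horizontal Lipschitz curves in L(4,1) for the structure induced via the quotient map
  (a local diffeomorphism; distribution and metric pushed forward): such a curve is one that,
  on each piece of a finite partition of [0,1], is the image under the quotient map of a
  horizontal Lipschitz curve of SU(2) (a lift through a local inverse chart of the quotient map);
  its length is the sum of the lengths of these pieces.\<close>
definition quot_curve_len :: "(real \<Rightarrow> cmat set) \<Rightarrow> real \<Rightarrow> bool" where
  "quot_curve_len \<sigma> len \<longleftrightarrow> (\<exists>(n::nat) ts \<gamma>s u1s u2s.
      0 < n \<and> ts 0 = 0 \<and> ts n = 1 \<and> (\<forall>i<n. ts i < ts (Suc i)) \<and>
      (\<forall>i<n. horizontal_on (ts i) (ts (Suc i)) (\<gamma>s i) (u1s i) (u2s i) \<and>
              (\<forall>t\<in>{ts i..ts (Suc i)}. cls (\<gamma>s i t) = \<sigma> t)) \<and>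
      len = (\<Sum>i<n. hlength (ts i) (ts (Suc i)) (u1s i) (u2s i)))"

definition quot_dist :: "cmat set \<Rightarrow> cmat set \<Rightarrow> real" where
  "quot_dist x y = Inf {len | \<sigma> len. quot_curve_len \<sigma> len \<and> \<sigma> 0 = x \<and> \<sigma> 1 = y}"

end

theory Submission
  imports Defs
begin

lemma mat2_eq_iff: "mat2 a b c d = mat2 a' b' c' d' \<longleftrightarrow> a = a' \<and> b = b' \<and> c = c' \<and> d = d'"
  by (auto simp: mat2_def vec_eq_iff forall_2)

lemma mat2_nth: "mat2 a b c d $ 1 $ 1 = a" "mat2 a b c d $ 1 $ 2 = b"
   "mat2 a b c d $ 2 $ 1 = c" "mat2 a b c d $ 2 $ 2 = d"
  by (auto simp: mat2_def)

lemma mat2_cases: "(g::cmat) = mat2 (g$1$1) (g$1$2) (g$2$1) (g$2$2)"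
  by (auto simp: mat2_def vec_eq_iff forall_2)

lemma mat2_mult: "mat2 a b c d ** mat2 a' b' c' d' = mat2 (a*a'+b*c') (a*b'+b*d') (c*a'+d*c') (c*b'+d*d')"
  by (auto simp: mat2_def vec_eq_iff forall_2 matrix_matrix_mult_def sum_2)

lemma mat2_add: "mat2 a b c d + mat2 a' b' c' d' = mat2 (a+a') (b+b') (c+c') (d+d')"
  by (auto simp: mat2_def vec_eq_iff forall_2)

lemma mat2_scaleR: "r *\<^sub>R mat2 a b c d = mat2 (r*\<^sub>R a) (r*\<^sub>R b) (r*\<^sub>R c) (r*\<^sub>R d)"
  by (auto simp: mat2_def vec_eq_iff forall_2)

lemma mat2_one: "mat 1 = mat2 1 0 0 1"
  by (auto simp: mat2_def vec_eq_iff forall_2 mat_def)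

lemma mat2_adj: "adj (mat2 a b c d) = mat2 (cnj a) (cnj c) (cnj b) (cnj d)"
  by (auto simp: mat2_def adj_def vec_eq_iff forall_2)

lemma mat2_det: "det (mat2 a b c d) = a*d - b*c"
  by (simp add: det_2 mat2_def)

lemma SU2_iff: "g \<in> SU2 \<longleftrightarrow> (\<exists>\<alpha> \<beta>. g = mat2 \<alpha> \<beta> (-cnj \<beta>) (cnj \<alpha>) \<and> \<alpha>*cnj \<alpha> + \<beta>*cnj \<beta> = 1)"
proof
  assume "g \<in> SU2"
  obtain a b c d where g: "g = mat2 a b c d" using mat2_cases by blast
  from \<open>g \<in> SU2\<close> have e: "a*cnj a + b*cnj b = 1" "a*cnj c + b*cnj d = 0" "a*d-b*c = 1"
    by (auto simp: SU2_def g mat2_mult mat2_adj mat2_one mat2_eq_iff mat2_det)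
  have e2: "cnj a * c + cnj b * d = 0" using arg_cong[OF e(2), of cnj] by (simp add: mult.commute)
  have e3: "cnj a * c = - (cnj b * d)" using e2 by (simp add: eq_neg_iff_add_eq_0)
  have "cnj a * (a*d-b*c) = (a*cnj a)*d - b*(cnj a * c)" by (simp add: algebra_simps)
  also have "\<dots> = (a*cnj a + b * cnj b)*d" unfolding e3 by (simp add: algebra_simps)
  finally have d: "d = cnj a" using e by simp
  have "- cnj b * (a*d-b*c) = -a*(cnj b * d) + (b*cnj b)*c" by (simp add: algebra_simps)
  also have "cnj b * d = - (cnj a * c)" using e3 by simp
  also have "-a*(- (cnj a * c)) + (b*cnj b)*c = (a*cnj a + b * cnj b)*c" by (simp add: algebra_simps)
  finally have c: "c = - cnj b" using e by simp
  show "\<exists>\<alpha> \<beta>. g = mat2 \<alpha> \<beta> (-cnj \<beta>) (cnj \<alpha>) \<and> \<alpha>*cnj \<alpha> + \<beta>*cnj \<beta> = 1"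
    using g c d e by blast
next
  assume "\<exists>\<alpha> \<beta>. g = mat2 \<alpha> \<beta> (-cnj \<beta>) (cnj \<alpha>) \<and> \<alpha>*cnj \<alpha> + \<beta>*cnj \<beta> = 1"
  then obtain \<alpha> \<beta> where g: "g = mat2 \<alpha> \<beta> (-cnj \<beta>) (cnj \<alpha>)" and e: "\<alpha>*cnj \<alpha> + \<beta>*cnj \<beta> = 1" by blast
  have 1: "g ** adj g = mat2 (\<alpha>*cnj \<alpha> + \<beta>*cnj \<beta>) 0 0 (\<alpha>*cnj \<alpha> + \<beta>*cnj \<beta>)"
    unfolding g mat2_adj mat2_mult mat2_eq_iff complex_cnj_cnj complex_cnj_minus
    by (simp add: mult.commute)
  have 2: "det g = \<alpha>*cnj \<alpha> + \<beta>*cnj \<beta>" unfolding g mat2_det by simp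
  show "g \<in> SU2" unfolding SU2_def using 1 2 e by (simp add: mat2_one)
qed

lemma SU2_mult: assumes "x \<in> SU2" "y \<in> SU2" shows "x ** y \<in> SU2"
proof -
  obtain a b where x: "x = mat2 a b (-cnj b) (cnj a)" "a*cnj a + b*cnj b = 1" using assms SU2_iff by blast
  obtain c d where y: "y = mat2 c d (-cnj d) (cnj c)" "c*cnj c + d*cnj d = 1" using assms SU2_iff by blast
  have n: "(a*c - b*cnj d) * cnj (a*c - b*cnj d) + (a*d+b*cnj c)*cnj (a*d+b*cnj c)
     = (a*cnj a + b*cnj b) * (c*cnj c + d*cnj d)"
    unfolding complex_cnj_diff complex_cnj_add complex_cnj_mult complex_cnj_cnj by algebra
  have eq: "x ** y = mat2 (a*c - b*cnj d) (a*d+b*cnj c) (-cnj (a*d+b*cnj c)) (cnj (a*c - b*cnj d))"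
    unfolding x y mat2_mult mat2_eq_iff complex_cnj_diff complex_cnj_add complex_cnj_mult complex_cnj_cnj
    by (simp add: algebra_simps)
  show ?thesis unfolding SU2_iff eq
    apply (rule exI[of _ "a*c - b*cnj d"], rule exI[of _ "a*d+b*cnj c"], rule conjI[OF refl])
    using n x(2) y(2) by simp
qed

lemma exp_p2_SU2: "exp_p2 t \<in> SU2"
proof -
  have "complex_of_real (cos (t/2)) * cnj (complex_of_real (cos (t/2))) + (\<i> * complex_of_real (sin (t/2))) * cnj (\<i> * complex_of_real (sin (t/2))) = 1"
    by (simp add: complex_eq_iff)
  then show ?thesis unfolding SU2_iff exp_p2_def
    by (intro exI[of _ "complex_of_real (cos (t/2))"] exI[of _ "\<i> * complex_of_real (sin (t/2))"]) (simp add: mat2_eq_iff)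
qed

lemma exp_p1_SU2: "exp_p1 t \<in> SU2"
proof -
  have "complex_of_real (cos (t/2)) * cnj (complex_of_real (cos (t/2))) + (complex_of_real (sin (t/2))) * cnj (complex_of_real (sin (t/2))) = 1"
    by (simp add: complex_eq_iff)
  then show ?thesis unfolding SU2_iff exp_p1_def
    by (intro exI[of _ "complex_of_real (cos (t/2))"] exI[of _ "complex_of_real (sin (t/2))"]) (simp add: mat2_eq_iff)
qed

lemma exp_p2_add: "exp_p2 s ** exp_p2 t = exp_p2 (s+t)"
  by (simp add: exp_p2_def mat2_mult mat2_eq_iff add_divide_distrib cos_add sin_add algebra_simps complex_eq_iff)

lemma exp_p1_add: "exp_p1 s ** exp_p1 t = exp_p1 (s+t)"
  by (simp add: exp_p1_def mat2_mult mat2_eq_iff add_divide_distrib cos_add sin_add algebra_simps complex_eq_iff)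

lemma exp_p2_0: "exp_p2 0 = mat 1" by (simp add: exp_p2_def mat2_one)
lemma exp_p1_0: "exp_p1 0 = mat 1" by (simp add: exp_p1_def mat2_one)

lemma euler_formula0:
  "exp_p2 (-(2*B)) ** exp_p1 (2*A) ** exp_p2 (2*C) =
   mat2 (Complex (cos A * cos (C-B)) (sin A * sin (B+C)))
        (Complex (sin A * cos (B+C)) (cos A * sin (C-B)))
        (- cnj (Complex (sin A * cos (B+C)) (cos A * sin (C-B))))
        (cnj (Complex (cos A * cos (C-B)) (sin A * sin (B+C))))"
  unfolding exp_p2_def exp_p1_def mat2_mult mat2_eq_iff
  apply (simp only: complex_eq_iff)
  apply (simp add: cos_add sin_add cos_diff sin_diff)
  apply (simp add: algebra_simps)
  done

lemma euler_exists:
  assumes "h \<in> SU2"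
  shows "\<exists>a b c. 0 \<le> a \<and> a \<le> pi \<and> 0 \<le> b \<and> b < 2*pi \<and> h = exp_p2 (-b) ** exp_p1 a ** exp_p2 c"
proof -
  obtain \<alpha> \<beta> where h: "h = mat2 \<alpha> \<beta> (-cnj \<beta>) (cnj \<alpha>)" and n: "\<alpha>*cnj \<alpha> + \<beta>*cnj \<beta> = 1"
    using assms SU2_iff by blast
  define \<gamma> where "\<gamma> = Complex (Re \<alpha>) (Im \<beta>)"
  define \<delta> where "\<delta> = Complex (Re \<beta>) (Im \<alpha>)"
  have nr: "(Re \<alpha>)\<^sup>2 + (Im \<alpha>)\<^sup>2 + ((Re \<beta>)\<^sup>2 + (Im \<beta>)\<^sup>2) = 1"
    using arg_cong[OF n, of Re] unfolding complex_mult_cnj by simp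
  have g2: "(cmod \<gamma>)\<^sup>2 + (cmod \<delta>)\<^sup>2 = 1" using nr by (simp add: \<gamma>_def \<delta>_def cmod_power2)
  define r where "r = cmod \<gamma>"
  have r0: "0 \<le> r" by (simp add: r_def)
  have r1: "r \<le> 1"
  proof -
    have "r\<^sup>2 \<le> 1" using g2 r_def by (smt (verit) zero_le_power2)
    then show ?thesis using r0 by (simp add: power_le_one_iff abs_le_square_iff[symmetric])
  qed
  define A where "A = arccos r"
  have A0: "0 \<le> A" "A \<le> pi/2" unfolding A_def using r0 r1 arccos_le_pi2[OF r0 r1] by (simp_all add: arccos_lbound)
  have cA: "cos A = r" using r0 r1 by (simp add: A_def)
  have sA: "sin A = cmod \<delta>"
  proof -
    have "sin A = sqrt (1 - r\<^sup>2)" using r0 r1 by (simp add: A_def sin_arccos)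
    also have "1 - r\<^sup>2 = (cmod \<delta>)\<^sup>2" using g2 r_def by simp
    finally show ?thesis by simp
  qed
  define \<phi> where "\<phi> = Arg \<gamma>"
  define \<psi> where "\<psi> = Arg \<delta>"
  have gam: "Re \<gamma> = r * cos \<phi>" "Im \<gamma> = r * sin \<phi>"
    using rcis_cmod_Arg[of \<gamma>] by (metis Re_rcis Im_rcis \<phi>_def r_def)+
  have del: "Re \<delta> = cmod \<delta> * cos \<psi>" "Im \<delta> = cmod \<delta> * sin \<psi>"
    using rcis_cmod_Arg[of \<delta>] by (metis Re_rcis Im_rcis \<psi>_def)+
  define x where "x = (\<psi> - \<phi>) / (2*pi)"
  define j where "j = floor x"
  define b where "b = \<psi> - \<phi> - 2*pi* of_int j"
  define c where "c = \<psi> + \<phi> + 2*pi* of_int j"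
  have jx: "of_int j \<le> x" "x < of_int j + 1" unfolding j_def by linarith+
  have b0: "0 \<le> b"
  proof -
    have "2*pi* of_int j \<le> 2*pi*x" using jx by simp
    also have "2*pi*x = \<psi> - \<phi>" by (simp add: x_def)
    finally show ?thesis by (simp add: b_def)
  qed
  have b1: "b < 2*pi"
  proof -
    have "2*pi*x < 2*pi*(of_int j + 1)" using jx by simp
    also have "2*pi*x = \<psi> - \<phi>" by (simp add: x_def)
    finally show ?thesis by (simp add: b_def algebra_simps)
  qed
  have CB: "c/2 - b/2 = \<phi> + (2*pi) * of_int j" by (simp add: b_def c_def field_simps)
  have BC: "b/2 + c/2 = \<psi>" by (simp add: b_def c_def field_simps)
  have e: "exp_p2 (-b) ** exp_p1 (2*A) ** exp_p2 c =
    mat2 (Complex (cos A * cos \<phi>) (sin A * sin \<psi>))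
        (Complex (sin A * cos \<psi>) (cos A * sin \<phi>))
        (- cnj (Complex (sin A * cos \<psi>) (cos A * sin \<phi>)))
        (cnj (Complex (cos A * cos \<phi>) (sin A * sin \<psi>)))"
    using euler_formula0[of "b/2" A "c/2"] unfolding CB BC
    by (simp add: cos_add sin_add)
  have "h = exp_p2 (-b) ** exp_p1 (2*A) ** exp_p2 c"
    unfolding e h mat2_eq_iff using gam del
    by (simp add: complex_eq_iff cA sA \<gamma>_def \<delta>_def)
  then show ?thesis using A0 b0 b1 by (intro exI[of _ "2*A"] exI[of _ b] exI[of _ c]) auto
qed

lemmas massoc = matrix_mul_assoc[symmetric]

abbreviation K :: "int \<Rightarrow> cmat" where "K k \<equiv> exp_p2 (of_int k * pi)"

lemma lens_rel_E: assumes "lens_rel g x" shows "\<exists>k::int. x = g ** K k"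
proof -
  from assms obtain a b c1 c2 k where g: "g = exp_p2 (-b) ** exp_p1 a ** exp_p2 c1"
    and x: "x = exp_p2 (-b) ** exp_p1 a ** exp_p2 c2" and k: "c1 - c2 = of_int k * pi"
    unfolding lens_rel_def by blast
  have "c2 = c1 + of_int (-k) * pi" using k by simp
  then have "x = exp_p2 (-b) ** exp_p1 a ** (exp_p2 c1 ** K (-k))"
    unfolding x exp_p2_add by simp
  then show ?thesis unfolding g by (metis massoc)
qed

lemma lens_rel_I: assumes "g \<in> SU2" shows "lens_rel g (g ** K k)"
proof -
  obtain a b c where abc: "0 \<le> a" "a \<le> pi" "0 \<le> b" "b < 2*pi" and g: "g = exp_p2 (-b) ** exp_p1 a ** exp_p2 c"
    using euler_exists[OF assms] by blast
  have "g ** K k = exp_p2 (-b) ** exp_p1 a ** exp_p2 (c + of_int k * pi)"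
    unfolding g by (simp only: massoc exp_p2_add)
  moreover have "c - (c + of_int k * pi) = of_int (-k) * pi" by simp
  ultimately show ?thesis unfolding lens_rel_def using abc g by blast
qed

lemma K_SU2: "K k \<in> SU2" by (rule exp_p2_SU2)

lemma cls_iff: assumes "g \<in> SU2" shows "x \<in> cls g \<longleftrightarrow> (\<exists>k::int. x = g ** K k)"
  using assms lens_rel_E lens_rel_I SU2_mult K_SU2 unfolding cls_def by blast

lemma K_add: "K k ** K m = K (k + m)"
  by (simp add: exp_p2_add distrib_right)

lemma K_0: "K 0 = mat 1" by (simp add: exp_p2_0)

lemma cls_self: assumes "g \<in> SU2" shows "g \<in> cls g"
  using cls_iff[OF assms, of g] K_0 by (metis matrix_mul_rid)

lemma cls_SU2: "x \<in> cls g \<Longrightarrow> x \<in> SU2" by (simp add: cls_def)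

lemma cls_eq: assumes "g \<in> SU2" "x \<in> cls g" shows "cls x = cls g"
proof -
  obtain k where x: "x = g ** K k" using assms cls_iff by blast
  have xs: "x \<in> SU2" using assms cls_SU2 by blast
  have gx: "g = x ** K (-k)" unfolding x massoc K_add by (simp add: exp_p2_0)
  show ?thesis
  proof (intro set_eqI iffI)
    fix y assume "y \<in> cls x"
    then obtain m where "y = x ** K m" using cls_iff[OF xs] by blast
    then have "y = g ** K (k + m)" unfolding x massoc K_add by simp
    then show "y \<in> cls g" using cls_iff[OF assms(1)] by blast
  next
    fix y assume "y \<in> cls g"
    then obtain m where "y = g ** K m" using cls_iff[OF assms(1)] by blast
    then have "y = x ** K (-k + m)" unfolding gx massoc K_add by simp
    then show "y \<in> cls x" using cls_iff[OF xs] by blast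
  qed
qed

lemma K_4: "K (4*q) = mat 1"
proof -
  have "of_int (4*q) * pi / 2 = (2*pi) * of_int q" by simp
  then show ?thesis unfolding exp_p2_def mat2_one by (simp only: cos_int_2pin sin_int_2pin) simp
qed

lemma K_mod: "K k = K (k mod 4)"
proof -
  have "K k = K (4 * (k div 4)) ** K (k mod 4)" unfolding K_add by simp
  then show ?thesis unfolding K_4 by simp
qed

lemma cls_finite: assumes "g \<in> SU2" shows "finite (cls g)"
proof -
  have "cls g \<subseteq> (\<lambda>r. g ** K r) ` {0..3}"
  proof
    fix x assume "x \<in> cls g"
    then obtain k where "x = g ** K k" using cls_iff[OF assms] by blast
    then have "x = g ** K (k mod 4)" using K_mod by metis
    moreover have "k mod 4 \<in> {0..3}" by simp
    ultimately show "x \<in> (\<lambda>r. g ** K r) ` {0..3}" by blast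
  qed
  then show ?thesis by (rule finite_subset) simp
qed

lemma sincos_K: "sin (of_int k * pi / 2) * cos (of_int k * pi / 2) = 0"
proof -
  have "sin (of_int k * pi / 2) * cos (of_int k * pi / 2) = sin (of_int k * pi) / 2"
    using sin_double[of "of_int k * pi / 2"] by simp
  also have "sin (of_int k * pi) = 0" by (simp add: sin_times_pi_eq_0 )
  finally show ?thesis by simp
qed

lemma p1_K: "p1 ** K k = cos (of_int k * pi) *\<^sub>R (K k ** p1)"
proof -
  define C where "C = cos (of_int k * pi / 2)"
  define S where "S = sin (of_int k * pi / 2)"
  have SC: "S * C = 0" using sincos_K by (simp add: S_def C_def)
  have one: "C\<^sup>2 + S\<^sup>2 = 1" by (simp add: S_def C_def)
  have cs: "cos (of_int k * pi) = C\<^sup>2 - S\<^sup>2"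
    using cos_double[of "of_int k * pi / 2"] by (simp add: S_def C_def)
  have e1: "S = (C\<^sup>2 - S\<^sup>2) * (- S)"
  proof -
    have "(C\<^sup>2 - S\<^sup>2) * (- S) = -(C * (S*C)) + S * S\<^sup>2" by (simp add: algebra_simps power2_eq_square)
    also have "\<dots> = S * (C\<^sup>2 + S\<^sup>2) - C * (S * C)" using SC by (simp add: algebra_simps power2_eq_square)
    finally show ?thesis using one SC by simp
  qed
  have e2: "C = (C\<^sup>2 - S\<^sup>2) * C"
  proof -
    have "(C\<^sup>2 - S\<^sup>2) * C = C * (C\<^sup>2 + S\<^sup>2) - 2 * S * (S * C)" by (simp add: algebra_simps power2_eq_square)
    then show ?thesis using one SC by simp
  qed
  show ?thesis unfolding p1_def exp_p2_def mat2_mult mat2_scaleR mat2_eq_iff cs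
    unfolding C_def[symmetric] S_def[symmetric]
    using e1 e2 by (simp add: complex_eq_iff scaleR_conv_of_real)
qed

lemma p2_K: "p2 ** K k = K k ** p2"
  unfolding p2_def exp_p2_def mat2_mult mat2_eq_iff by (simp add: algebra_simps)

lemma mrd_add: "((A::cmat) + B) ** C = A ** C + B ** C"
  by (vector matrix_matrix_mult_def sum.distrib[symmetric] field_simps)

lemma mrd_diff: "((A::cmat) - B) ** C = A ** C - B ** C"
  using mrd_add[of "A - B" B C] by (simp add: algebra_simps)

lemma mrd_scale: "(r *\<^sub>R (A::cmat)) ** C = r *\<^sub>R (A ** C)"
  by (simp add: scalar_matrix_assoc)

lemma mld_scale: "(A::cmat) ** (r *\<^sub>R C) = r *\<^sub>R (A ** C)"
  by (simp add: matrix_scalar_ac scalar_matrix_assoc)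

lemma mld_diff: "(A::cmat) ** (B - C) = A ** B - A ** C"
  using matrix_add_ldistrib[of A "B - C" C] by (simp add: algebra_simps)

lemma bl_right: "bounded_linear (\<lambda>A::cmat. A ** C)"
  unfolding linear_conv_bounded_linear[symmetric]
  by (rule linearI) (simp_all add: mrd_add mrd_scale)

lemma norm_mat2: "norm (mat2 a b c d) = sqrt ((cmod a)\<^sup>2 + (cmod b)\<^sup>2 + (cmod c)\<^sup>2 + (cmod d)\<^sup>2)"
proof -
  have r1: "norm (mat2 a b c d $ 1) = sqrt ((cmod a)\<^sup>2 + (cmod b)\<^sup>2)"
    by (simp add: norm_vec_def L2_set_def sum_2 mat2_def)
  have r2: "norm (mat2 a b c d $ 2) = sqrt ((cmod c)\<^sup>2 + (cmod d)\<^sup>2)"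
    by (simp add: norm_vec_def L2_set_def sum_2 mat2_def)
  show ?thesis
    by (simp add: norm_vec_def[of "mat2 a b c d"] L2_set_def sum_2 r1 r2 add.assoc)
qed

lemma cmod_sq: "(cmod z)\<^sup>2 = Re (z * cnj z)"
  by (simp add: complex_mult_cnj cmod_power2)

lemma row_id:
  assumes "\<alpha>*cnj \<alpha> + \<beta>*cnj \<beta> = 1"
  shows "(cmod (a*\<alpha> + b*(-cnj \<beta>)))\<^sup>2 + (cmod (a*\<beta> + b*cnj \<alpha>))\<^sup>2 = (cmod a)\<^sup>2 + (cmod b)\<^sup>2"
proof -
  have "(a*\<alpha> + b*(-cnj \<beta>)) * cnj (a*\<alpha> + b*(-cnj \<beta>)) + (a*\<beta> + b*cnj \<alpha>) * cnj (a*\<beta> + b*cnj \<alpha>)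
     = (a * cnj a + b * cnj b) * (\<alpha>*cnj \<alpha> + \<beta>*cnj \<beta>)"
    unfolding complex_cnj_diff complex_cnj_add complex_cnj_mult complex_cnj_cnj complex_cnj_minus by algebra
  then have "Re ((a*\<alpha> + b*(-cnj \<beta>)) * cnj (a*\<alpha> + b*(-cnj \<beta>))) + Re ((a*\<beta> + b*cnj \<alpha>) * cnj (a*\<beta> + b*cnj \<alpha>))
     = Re (a * cnj a) + Re (b * cnj b)" using assms by (metis mult_1_right plus_complex.sel(1))
  then show ?thesis by (simp only: cmod_sq)
qed

lemma col_id:
  assumes "\<alpha>*cnj \<alpha> + \<beta>*cnj \<beta> = 1"
  shows "(cmod (\<alpha>*a + \<beta>*c))\<^sup>2 + (cmod (-cnj \<beta>*a + cnj \<alpha>*c))\<^sup>2 = (cmod a)\<^sup>2 + (cmod c)\<^sup>2"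
proof -
  have "(\<alpha>*a + \<beta>*c) * cnj (\<alpha>*a + \<beta>*c) + (-cnj \<beta>*a + cnj \<alpha>*c) * cnj (-cnj \<beta>*a + cnj \<alpha>*c)
     = (a * cnj a + c * cnj c) * (\<alpha>*cnj \<alpha> + \<beta>*cnj \<beta>)"
    unfolding complex_cnj_diff complex_cnj_add complex_cnj_mult complex_cnj_cnj complex_cnj_minus by algebra
  then have "Re ((\<alpha>*a + \<beta>*c) * cnj (\<alpha>*a + \<beta>*c)) + Re ((-cnj \<beta>*a + cnj \<alpha>*c) * cnj (-cnj \<beta>*a + cnj \<alpha>*c))
     = Re (a * cnj a) + Re (c * cnj c)" using assms by (metis mult_1_right plus_complex.sel(1))
  then show ?thesis by (simp only: cmod_sq)
qed

lemma norm_right: assumes "y \<in> SU2" shows "norm ((A::cmat) ** y) = norm A"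
proof -
  obtain \<alpha> \<beta> where y: "y = mat2 \<alpha> \<beta> (-cnj \<beta>) (cnj \<alpha>)" and e: "\<alpha>*cnj \<alpha> + \<beta>*cnj \<beta> = 1"
    using assms SU2_iff by blast
  obtain a b c d where A: "A = mat2 a b c d" using mat2_cases by blast
  show ?thesis unfolding A y mat2_mult norm_mat2
    using row_id[OF e, of a b] row_id[OF e, of c d] by (simp add: add.assoc)
qed

lemma norm_left: assumes "y \<in> SU2" shows "norm (y ** (A::cmat)) = norm A"
proof -
  obtain \<alpha> \<beta> where y: "y = mat2 \<alpha> \<beta> (-cnj \<beta>) (cnj \<alpha>)" and e: "\<alpha>*cnj \<alpha> + \<beta>*cnj \<beta> = 1"
    using assms SU2_iff by blast
  obtain a b c d where A: "A = mat2 a b c d" using mat2_cases by blast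
  have "(cmod (\<alpha>*a + \<beta>*c))\<^sup>2 + (cmod (\<alpha>*b + \<beta>*d))\<^sup>2 + (cmod (-cnj \<beta>*a + cnj \<alpha>*c))\<^sup>2 + (cmod (-cnj \<beta>*b + cnj \<alpha>*d))\<^sup>2
    = (cmod a)\<^sup>2 + (cmod b)\<^sup>2 + (cmod c)\<^sup>2 + (cmod d)\<^sup>2"
    using col_id[OF e, of a c] col_id[OF e, of b d] by simp
  then show ?thesis unfolding A y mat2_mult norm_mat2 by simp
qed

lemma ctrl_mat: "u *\<^sub>R p1 + v *\<^sub>R p2 = mat2 0 (Complex (u/2) (v/2)) (Complex (-u/2) (v/2)) 0"
  unfolding p1_def p2_def mat2_scaleR mat2_add mat2_eq_iff by (simp add: complex_eq_iff scaleR_conv_of_real)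

lemma norm_ctrl: "norm (u *\<^sub>R p1 + v *\<^sub>R p2) = sqrt ((u\<^sup>2 + v\<^sup>2) / 2)"
  unfolding ctrl_mat norm_mat2 by (simp add: cmod_power2 power_divide)

lemma norm_hor: "x \<in> SU2 \<Longrightarrow> norm (x ** (u *\<^sub>R p1 + v *\<^sub>R p2)) = sqrt ((u\<^sup>2 + v\<^sup>2) / 2)"
  by (simp add: norm_left norm_ctrl)

lemma bl_left: "bounded_linear (\<lambda>A::cmat. C ** A)"
  unfolding linear_conv_bounded_linear[symmetric]
  by (rule linearI) (simp_all add: matrix_add_ldistrib matrix_scalar_ac scalar_matrix_assoc)

lemma neg_null: "N \<in> null_sets lborel \<Longrightarrow> negligible N"
  by (simp add: negligible_iff_null_sets null_sets_completionI)

lemma hor_deriv: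
  assumes ab: "a \<le> b" and su: "\<And>t. t\<in>{a..b} \<Longrightarrow> \<gamma> t \<in> SU2"
    and d: "\<And>t. t\<in>{a..b} \<Longrightarrow> (\<gamma> has_vector_derivative (\<gamma> t ** (u t *\<^sub>R p1 + v t *\<^sub>R p2))) (at t within {a..b})"
    and M: "\<And>t. t\<in>{a..b} \<Longrightarrow> sqrt (((u t)\<^sup>2 + (v t)\<^sup>2) / 2) \<le> M" "0 \<le> M"
  shows "horizontal_on a b \<gamma> u v"
proof -
  have "M-lipschitz_on {a..b} \<gamma>"
  proof (rule bounded_derivative_imp_lipschitz)
    show "(\<gamma> has_derivative (\<lambda>h. h *\<^sub>R (\<gamma> t ** (u t *\<^sub>R p1 + v t *\<^sub>R p2)))) (at t within {a..b})"
      if "t \<in> {a..b}" for t using d[OF that] by (simp add: has_vector_derivative_def)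
    show "onorm (\<lambda>h. h *\<^sub>R (\<gamma> t ** (u t *\<^sub>R p1 + v t *\<^sub>R p2))) \<le> M" if "t \<in> {a..b}" for t
    proof -
      have "onorm (\<lambda>h::real. h *\<^sub>R (\<gamma> t ** (u t *\<^sub>R p1 + v t *\<^sub>R p2))) = onorm (\<lambda>h::real. h) * norm (\<gamma> t ** (u t *\<^sub>R p1 + v t *\<^sub>R p2))"
        by (rule onorm_scaleR_left) (rule bounded_linear_ident)
      also have "\<dots> = sqrt (((u t)\<^sup>2 + (v t)\<^sup>2) / 2)" by (simp add: onorm_id norm_hor su[OF that])
      finally show ?thesis using M(1)[OF that] by simp
    qed
  qed (auto simp: M(2))
  then show ?thesis unfolding horizontal_on_def using ab su d
    by (intro conjI exI[of _ M] exI[of _ "{}"]) auto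
qed

definition Q1 :: cmat where "Q1 = mat2 0 1 (-1) 0"
definition Q2 :: cmat where "Q2 = mat2 0 \<i> \<i> 0"

lemma exp_p2_lin: "exp_p2 \<theta> = cos (\<theta>/2) *\<^sub>R mat 1 + sin (\<theta>/2) *\<^sub>R Q2"
  unfolding exp_p2_def Q2_def mat2_one mat2_scaleR mat2_add by (simp add: scaleR_conv_of_real mult.commute)

lemma exp_p1_lin: "exp_p1 \<theta> = cos (\<theta>/2) *\<^sub>R mat 1 + sin (\<theta>/2) *\<^sub>R Q1"
  unfolding exp_p1_def Q1_def mat2_one mat2_scaleR mat2_add by (simp add: scaleR_conv_of_real)

lemma exp_p2_der: "exp_p2 \<theta> ** (0 *\<^sub>R p1 + w *\<^sub>R p2) = (w/2) *\<^sub>R (- sin (\<theta>/2) *\<^sub>R mat 1 + cos (\<theta>/2) *\<^sub>R Q2)"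
  unfolding exp_p2_def Q2_def p1_def p2_def mat2_one mat2_scaleR mat2_add mat2_mult mat2_eq_iff
  by (simp add: scaleR_conv_of_real complex_eq_iff)

lemma exp_p1_der: "exp_p1 \<theta> ** (w *\<^sub>R p1 + 0 *\<^sub>R p2) = (w/2) *\<^sub>R (- sin (\<theta>/2) *\<^sub>R mat 1 + cos (\<theta>/2) *\<^sub>R Q1)"
  unfolding exp_p1_def Q1_def p1_def p2_def mat2_one mat2_scaleR mat2_add mat2_mult mat2_eq_iff
  by (simp add: scaleR_conv_of_real complex_eq_iff)

lemma lin_deriv:
  "((\<lambda>t. cos (w*(t-a)/2) *\<^sub>R mat 1 + sin (w*(t-a)/2) *\<^sub>R (Q::cmat)) has_vector_derivative
     (w/2) *\<^sub>R (- sin (w*(t-a)/2) *\<^sub>R mat 1 + cos (w*(t-a)/2) *\<^sub>R Q)) (at t within S)"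
  by (auto intro!: derivative_eq_intros simp: algebra_simps)

lemma seg2:
  assumes "x \<in> SU2" "a \<le> b"
  shows "horizontal_on a b (\<lambda>t. x ** exp_p2 (w*(t-a))) (\<lambda>t. 0) (\<lambda>t. w)"
proof (rule hor_deriv[where M="\<bar>w\<bar>"])
  fix t assume t: "t \<in> {a..b}"
  show "x ** exp_p2 (w*(t-a)) \<in> SU2" using assms SU2_mult exp_p2_SU2 by blast
  have "((\<lambda>t. x ** (cos (w*(t-a)/2) *\<^sub>R mat 1 + sin (w*(t-a)/2) *\<^sub>R Q2)) has_vector_derivative
     x ** ((w/2) *\<^sub>R (- sin (w*(t-a)/2) *\<^sub>R mat 1 + cos (w*(t-a)/2) *\<^sub>R Q2))) (at t within {a..b})"
    by (rule bounded_linear.has_vector_derivative[OF bl_left lin_deriv])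
  then show "((\<lambda>t. x ** exp_p2 (w*(t-a))) has_vector_derivative (x ** exp_p2 (w*(t-a)) ** ((\<lambda>t. 0) t *\<^sub>R p1 + (\<lambda>t. w) t *\<^sub>R p2))) (at t within {a..b})"
    unfolding massoc exp_p2_der by (simp only: exp_p2_lin)
  show "sqrt ((((\<lambda>t. 0) t)\<^sup>2 + ((\<lambda>t. w) t)\<^sup>2) / 2) \<le> \<bar>w\<bar>"
  proof -
    have "sqrt (w\<^sup>2 / 2) \<le> sqrt (w\<^sup>2)" by (rule real_sqrt_le_mono) simp
    then show ?thesis by simp
  qed
qed (use assms in auto)

lemma seg1:
  assumes "x \<in> SU2" "a \<le> b"
  shows "horizontal_on a b (\<lambda>t. x ** exp_p1 (w*(t-a))) (\<lambda>t. w) (\<lambda>t. 0)"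
proof (rule hor_deriv[where M="\<bar>w\<bar>"])
  fix t assume t: "t \<in> {a..b}"
  show "x ** exp_p1 (w*(t-a)) \<in> SU2" using assms SU2_mult exp_p1_SU2 by blast
  have "((\<lambda>t. x ** (cos (w*(t-a)/2) *\<^sub>R mat 1 + sin (w*(t-a)/2) *\<^sub>R Q1)) has_vector_derivative
     x ** ((w/2) *\<^sub>R (- sin (w*(t-a)/2) *\<^sub>R mat 1 + cos (w*(t-a)/2) *\<^sub>R Q1))) (at t within {a..b})"
    by (rule bounded_linear.has_vector_derivative[OF bl_left lin_deriv])
  then show "((\<lambda>t. x ** exp_p1 (w*(t-a))) has_vector_derivative (x ** exp_p1 (w*(t-a)) ** ((\<lambda>t. w) t *\<^sub>R p1 + (\<lambda>t. 0) t *\<^sub>R p2))) (at t within {a..b})"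
    unfolding massoc exp_p1_der by (simp only: exp_p1_lin)
  show "sqrt ((((\<lambda>t. w) t)\<^sup>2 + ((\<lambda>t. 0) t)\<^sup>2) / 2) \<le> \<bar>w\<bar>"
  proof -
    have "sqrt (w\<^sup>2 / 2) \<le> sqrt (w\<^sup>2)" by (rule real_sqrt_le_mono) simp
    then show ?thesis by simp
  qed
qed (use assms in auto)

lemma hlength_const: "a \<le> b \<Longrightarrow> hlength a b (\<lambda>t. c1) (\<lambda>t. c2) = sqrt (c1\<^sup>2 + c2\<^sup>2) * (b - a)"
  by (simp add: hlength_def)

lemma cos_int_pi_sq: "(cos (of_int k * pi))\<^sup>2 = 1"
proof -
  have "sin (of_int k * pi) = 0" by (simp add: sin_times_pi_eq_0)
  then show ?thesis using sin_cos_squared_add[of "of_int k * pi"] by simp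
qed

lemma hor_right:
  assumes h: "horizontal_on a b \<gamma> u v"
  shows "horizontal_on a b (\<lambda>t. \<gamma> t ** K k) (\<lambda>t. cos (of_int k * pi) * u t) v"
    and "hlength a b (\<lambda>t. cos (of_int k * pi) * u t) v = hlength a b u v"
proof -
  let ?c = "cos (of_int k * pi)"
  from h obtain C N where ab: "a \<le> b" and su: "\<forall>t\<in>{a..b}. \<gamma> t \<in> SU2" and L: "C-lipschitz_on {a..b} \<gamma>"
    and N: "N \<in> null_sets lborel"
    and d: "\<forall>t\<in>{a..b} - N. (\<gamma> has_vector_derivative (\<gamma> t ** (u t *\<^sub>R p1 + v t *\<^sub>R p2))) (at t within {a..b})"
    unfolding horizontal_on_def by blast
  have L2: "C-lipschitz_on {a..b} (\<lambda>t. \<gamma> t ** K k)"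
  proof (rule lipschitz_onI)
    fix x y assume "x \<in> {a..b}" "y \<in> {a..b}"
    have "dist (\<gamma> x ** K k) (\<gamma> y ** K k) = dist (\<gamma> x) (\<gamma> y)"
      by (simp add: dist_norm mrd_diff[symmetric] norm_right K_SU2)
    also have "\<dots> \<le> C * dist x y" using L \<open>x \<in> _\<close> \<open>y \<in> _\<close> by (rule lipschitz_onD)
    finally show "dist (\<gamma> x ** K k) (\<gamma> y ** K k) \<le> C * dist x y" .
  qed (rule lipschitz_on_nonneg[OF L])
  have PK: "(u t *\<^sub>R p1 + v t *\<^sub>R p2) ** K k = K k ** ((?c * u t) *\<^sub>R p1 + v t *\<^sub>R p2)" for t
    unfolding mrd_add mrd_scale p1_K p2_K matrix_add_ldistrib mld_scale scaleR_scaleR by (simp add: mult.commute)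
  have d2: "((\<lambda>t. \<gamma> t ** K k) has_vector_derivative ((\<gamma> t ** K k) ** ((?c * u t) *\<^sub>R p1 + v t *\<^sub>R p2))) (at t within {a..b})"
    if "t \<in> {a..b} - N" for t
  proof -
    have "((\<lambda>t. \<gamma> t ** K k) has_vector_derivative ((\<gamma> t ** (u t *\<^sub>R p1 + v t *\<^sub>R p2)) ** K k)) (at t within {a..b})"
      by (rule bounded_linear.has_vector_derivative[OF bl_right d[rule_format, OF that]])
    then show ?thesis by (simp only: massoc PK)
  qed
  show "horizontal_on a b (\<lambda>t. \<gamma> t ** K k) (\<lambda>t. ?c * u t) v"
    unfolding horizontal_on_def using ab su L2 N d2 SU2_mult K_SU2 by blast
  have "(?c * u t)\<^sup>2 = (u t)\<^sup>2" for t using cos_int_pi_sq[of k] by (simp add: power_mult_distrib)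
  then show "hlength a b (\<lambda>t. ?c * u t) v = hlength a b u v" by (simp add: hlength_def)
qed

lemma Icc_leb: "{a..b::real} \<in> sets lebesgue" by simp

lemma hor_integrable:
  assumes h: "horizontal_on a b \<gamma> u v"
  shows "(\<lambda>t. sqrt ((u t)\<^sup>2 + (v t)\<^sup>2)) integrable_on {a..b}"
proof -
  from h obtain C N where ab: "a \<le> b" and su: "\<forall>t\<in>{a..b}. \<gamma> t \<in> SU2" and L: "C-lipschitz_on {a..b} \<gamma>"
    and N: "N \<in> null_sets lborel"
    and d: "\<forall>t\<in>{a..b} - N. (\<gamma> has_vector_derivative (\<gamma> t ** (u t *\<^sub>R p1 + v t *\<^sub>R p2))) (at t within {a..b})"
    unfolding horizontal_on_def by blast
  have C0: "0 \<le> C" using L by (rule lipschitz_on_nonneg)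
  define cl where "cl s = max a (min b s)" for s
  have cl_in: "cl s \<in> {a..b}" for s using ab by (auto simp: cl_def)
  have cl_id: "s \<in> {a..b} \<Longrightarrow> cl s = s" for s by (auto simp: cl_def)
  have cl_lip: "\<bar>cl s - cl t\<bar> \<le> \<bar>s - t\<bar>" for s t by (auto simp: cl_def)
  define G where "G s = \<gamma> (cl s)" for s
  have GL: "norm (G s - G t) \<le> C * \<bar>s - t\<bar>" for s t
  proof -
    have "norm (G s - G t) \<le> C * norm (cl s - cl t)" unfolding G_def
      by (rule lipschitz_on_normD[OF L cl_in cl_in])
    also have "\<dots> \<le> C * \<bar>s - t\<bar>" using cl_lip C0 by (simp add: mult_left_mono)
    finally show ?thesis .
  qed
  have Gc: "continuous_on UNIV G"
  proof -
    have c1: "continuous_on UNIV cl" unfolding cl_def by (intro continuous_intros)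
    have c2: "continuous_on {a..b} \<gamma>" using L by (rule lipschitz_on_continuous_on)
    show ?thesis unfolding G_def
      by (rule continuous_on_compose2[OF c2 c1]) (use cl_in in blast)
  qed
  define hh where "hh n = inverse (real (Suc n))" for n
  have hh0: "0 < hh n" for n by (simp add: hh_def)
  define q where "q n t = sqrt 2 * norm (real (Suc n) *\<^sub>R (G (t + hh n) - G t))" for n t
  have qm: "q n measurable_on {a..b}" for n
  proof -
    have "continuous_on {a..b} (q n)" unfolding q_def
      by (intro continuous_intros continuous_on_compose2[OF Gc]) auto
    then show ?thesis
      by (simp add: measurable_on_iff_borel_measurable continuous_imp_measurable_on_sets_lebesgue)
  qed
  have qb: "q n t \<le> sqrt 2 * C" for n t
  proof -
    have "norm (real (Suc n) *\<^sub>R (G (t + hh n) - G t)) = real (Suc n) * norm (G (t + hh n) - G t)" by simp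
    also have "\<dots> \<le> real (Suc n) * (C * \<bar>t + hh n - t\<bar>)" by (intro mult_left_mono GL) auto
    also have "\<dots> = C" using hh0[of n] by (simp add: hh_def)
    finally show ?thesis unfolding q_def by simp
  qed
  define N' where "N' = N \<union> {b}"
  have negN': "negligible N'" unfolding N'_def using neg_null[OF N] by (simp add: negligible_Un)
  define F where "F t = (if t \<in> N' then 0 else sqrt ((u t)\<^sup>2 + (v t)\<^sup>2))" for t
  have lim: "(\<lambda>n. q n t) \<longlonglongrightarrow> F t" if t: "t \<in> {a..b} - N'" for t
  proof -
    let ?D = "\<gamma> t ** (u t *\<^sub>R p1 + v t *\<^sub>R p2)"
    have tN: "t \<in> {a..b} - N" and tb: "t < b" using t by (auto simp: N'_def)
    have "(\<gamma> has_derivative (\<lambda>h. h *\<^sub>R ?D)) (at t within {a..b})"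
      using d tN by (simp add: has_vector_derivative_def)
    then have dl: "((\<lambda>y. (1 / norm (y - t)) *\<^sub>R (\<gamma> y - (\<gamma> t + (y - t) *\<^sub>R ?D))) \<longlongrightarrow> 0) (at t within {a..b})"
      by (simp add: has_derivative_within)
    have hl: "hh \<longlonglongrightarrow> 0" unfolding hh_def by (rule LIMSEQ_inverse_real_of_nat)
    have ev: "eventually (\<lambda>n. hh n < b - t) sequentially"
      using order_tendstoD(2)[OF hl, of "b - t"] tb by simp
    have fl: "filterlim (\<lambda>n. t + hh n) (at t within {a..b}) sequentially"
      unfolding filterlim_at
    proof
      show "\<forall>\<^sub>F n in sequentially. t + hh n \<in> {a..b} \<and> t + hh n \<noteq> t"
        using ev proof eventually_elim
        case (elim n) then show ?case using hh0[of n] t by auto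
      qed
      show "((\<lambda>n. t + hh n) \<longlongrightarrow> t) sequentially" using tendsto_add[OF tendsto_const hl] by simp
    qed
    have c1: "((\<lambda>n. (1 / norm (t + hh n - t)) *\<^sub>R (\<gamma> (t + hh n) - (\<gamma> t + (t + hh n - t) *\<^sub>R ?D))) \<longlongrightarrow> 0) sequentially"
      using filterlim_compose[OF dl fl] by (simp add: o_def)
    have "((\<lambda>n. real (Suc n) *\<^sub>R (G (t + hh n) - G t) - ?D) \<longlongrightarrow> 0) sequentially"
    proof (rule Lim_transform_eventually[OF c1])
      show "\<forall>\<^sub>F n in sequentially. (1 / norm (t + hh n - t)) *\<^sub>R (\<gamma> (t + hh n) - (\<gamma> t + (t + hh n - t) *\<^sub>R ?D))
         = real (Suc n) *\<^sub>R (G (t + hh n) - G t) - ?D"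
        using ev proof eventually_elim
        case (elim n)
        have i1: "t + hh n \<in> {a..b}" using elim hh0[of n] t by auto
        have i2: "t \<in> {a..b}" using t by auto
        have "G (t + hh n) = \<gamma> (t + hh n)" "G t = \<gamma> t" unfolding G_def using cl_id i1 i2 by auto
        moreover have "1 / norm (t + hh n - t) = real (Suc n)" "real (Suc n) * hh n = 1"
          using hh0[of n] by (auto simp: hh_def divide_inverse)
        ultimately show ?case by (simp add: algebra_simps)
      qed
    qed
    then have "((\<lambda>n. real (Suc n) *\<^sub>R (G (t + hh n) - G t)) \<longlongrightarrow> ?D) sequentially"
      by (simp add: Lim_null[symmetric])
    then have "(\<lambda>n. q n t) \<longlonglongrightarrow> sqrt 2 * norm ?D" unfolding q_def
      by (intro tendsto_intros)
    moreover have "sqrt 2 * norm ?D = F t"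
    proof -
      have "sqrt 2 * norm ?D = sqrt 2 * sqrt (((u t)\<^sup>2 + (v t)\<^sup>2) / 2)"
        using su t by (simp add: norm_hor)
      also have "\<dots> = sqrt ((u t)\<^sup>2 + (v t)\<^sup>2)" by (simp add: real_sqrt_mult[symmetric])
      finally show ?thesis using t by (simp add: F_def)
    qed
    ultimately show ?thesis by simp
  qed
  have Fm: "F measurable_on {a..b}" by (rule measurable_on_limit[OF qm negN' lim])
  have Fb: "norm (F t) \<le> sqrt 2 * C" if "t \<in> {a..b}" for t
  proof (cases "t \<in> N'")
    case True then show ?thesis using C0 by (simp add: F_def)
  next
    case False
    then have "F t \<le> sqrt 2 * C" using LIMSEQ_le_const2[OF lim] qb that by blast
    moreover have "0 \<le> F t" by (simp add: F_def)
    ultimately show ?thesis by simp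
  qed
  have "F integrable_on {a..b}"
  proof (rule measurable_bounded_by_integrable_imp_integrable)
    show "F \<in> borel_measurable (lebesgue_on {a..b})" using Fm by (simp add: measurable_on_iff_borel_measurable)
    show "(\<lambda>x. sqrt 2 * C) integrable_on {a..b}" by (rule integrable_const_ivl)
  qed (use Fb in auto)
  then show ?thesis
    by (rule integrable_spike[OF _ negN']) (simp add: F_def)
qed

lemma hor_glue:
  assumes h1: "horizontal_on a b \<gamma> u v" and h2: "horizontal_on b c \<delta> u' v'" and e: "\<gamma> b = \<delta> b"
  shows "horizontal_on a c (\<lambda>t. if t \<le> b then \<gamma> t else \<delta> t) (\<lambda>t. if t \<le> b then u t else u' t) (\<lambda>t. if t \<le> b then v t else v' t)"
    and "hlength a c (\<lambda>t. if t \<le> b then u t else u' t) (\<lambda>t. if t \<le> b then v t else v' t) = hlength a b u v + hlength b c u' v'"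
proof -
  let ?\<eta> = "\<lambda>t. if t \<le> b then \<gamma> t else \<delta> t"
  let ?\<mu> = "\<lambda>t. if t \<le> b then u t else u' t"
  let ?\<nu> = "\<lambda>t. if t \<le> b then v t else v' t"
  from h1 obtain C1 N1 where ab: "a \<le> b" and su1: "\<forall>t\<in>{a..b}. \<gamma> t \<in> SU2" and L1: "C1-lipschitz_on {a..b} \<gamma>"
    and N1: "N1 \<in> null_sets lborel"
    and d1: "\<forall>t\<in>{a..b} - N1. (\<gamma> has_vector_derivative (\<gamma> t ** (u t *\<^sub>R p1 + v t *\<^sub>R p2))) (at t within {a..b})"
    unfolding horizontal_on_def by blast
  from h2 obtain C2 N2 where bc: "b \<le> c" and su2: "\<forall>t\<in>{b..c}. \<delta> t \<in> SU2" and L2: "C2-lipschitz_on {b..c} \<delta>"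
    and N2: "N2 \<in> null_sets lborel"
    and d2: "\<forall>t\<in>{b..c} - N2. (\<delta> has_vector_derivative (\<delta> t ** (u' t *\<^sub>R p1 + v' t *\<^sub>R p2))) (at t within {b..c})"
    unfolding horizontal_on_def by blast
  have L: "(max C1 C2)-lipschitz_on {a..c} ?\<eta>" by (rule lipschitz_on_concat_max[OF L1 L2 e])
  define N where "N = N1 \<union> N2 \<union> {a,b,c}"
  have N12: "N1 \<union> N2 \<in> null_sets lborel" by (rule null_sets.Un[OF N1 N2])
  have N3: "{a,b,c} \<in> null_sets lborel" by (rule finite_imp_null_set_lborel) simp
  have N: "N \<in> null_sets lborel" unfolding N_def by (rule null_sets.Un[OF N12 N3])
  have su: "\<forall>t\<in>{a..c}. ?\<eta> t \<in> SU2" using su1 su2 by auto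
  have d: "(?\<eta> has_vector_derivative (?\<eta> t ** (?\<mu> t *\<^sub>R p1 + ?\<nu> t *\<^sub>R p2))) (at t within {a..c})"
    if t: "t \<in> {a..c} - N" for t
  proof (cases "t < b")
    case True
    have tt: "t \<in> {a..b} - N1" using t True by (auto simp: N_def)
    have "(?\<eta> has_vector_derivative (\<gamma> t ** (u t *\<^sub>R p1 + v t *\<^sub>R p2))) (at t within {a..b})"
      by (rule has_vector_derivative_transform_within[OF d1[rule_format, OF tt], of 1]) (use tt in auto)
    moreover have "at t within {a..c} = at t within {a..b}"
      by (rule at_within_nhd[of t "{..<b}"]) (use True bc in auto)
    ultimately show ?thesis using True by simp
  next
    case False
    then have tb: "b < t" using t by (auto simp: N_def)
    have tt: "t \<in> {b..c} - N2" using t tb by (auto simp: N_def)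
    have "(?\<eta> has_vector_derivative (\<delta> t ** (u' t *\<^sub>R p1 + v' t *\<^sub>R p2))) (at t within {b..c})"
      by (rule has_vector_derivative_transform_within[OF d2[rule_format, OF tt], of 1]) (use tt e in auto)
    moreover have "at t within {a..c} = at t within {b..c}"
      by (rule at_within_nhd[of t "{b<..}"]) (use tb ab in auto)
    ultimately show ?thesis using tb by simp
  qed
  show "horizontal_on a c ?\<eta> ?\<mu> ?\<nu>"
    unfolding horizontal_on_def using ab bc su L N d by (intro conjI exI[of _ "max C1 C2"] exI[of _ N]) auto
  let ?f1 = "\<lambda>t. sqrt ((u t)\<^sup>2 + (v t)\<^sup>2)"
  let ?f2 = "\<lambda>t. sqrt ((u' t)\<^sup>2 + (v' t)\<^sup>2)"
  let ?f = "\<lambda>t. sqrt ((?\<mu> t)\<^sup>2 + (?\<nu> t)\<^sup>2)"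
  have i1: "?f1 integrable_on {a..b}" by (rule hor_integrable[OF h1])
  have i2: "?f2 integrable_on {b..c}" by (rule hor_integrable[OF h2])
  have e1: "integral {a..b} ?f = integral {a..b} ?f1" by (rule integral_cong) auto
  have e2: "integral {b..c} ?f = integral {b..c} ?f2" by (rule integral_spike[of "{b}"]) auto
  have j1: "?f integrable_on {a..b}" by (rule integrable_spike[OF i1, of "{}"]) auto
  have j2: "?f integrable_on {b..c}" by (rule integrable_spike[OF i2, of "{b}"]) auto
  have j: "?f integrable_on {a..c}" by (rule Henstock_Kurzweil_Integration.integrable_combine[OF ab bc j1 j2])
  show "hlength a c ?\<mu> ?\<nu> = hlength a b u v + hlength b c u' v'"
    unfolding hlength_def using Henstock_Kurzweil_Integration.integral_combine[OF ab bc j] e1 e2 by simp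
qed

definition reach :: "real \<Rightarrow> real \<Rightarrow> cmat \<Rightarrow> cmat \<Rightarrow> bool" where
  "reach a b x y \<longleftrightarrow> (\<exists>\<gamma> u v. horizontal_on a b \<gamma> u v \<and> \<gamma> a = x \<and> \<gamma> b = y)"

lemma reach_trans: assumes "reach a b x y" "reach b c y z" shows "reach a c x z"
proof -
  obtain \<gamma> u v where h1: "horizontal_on a b \<gamma> u v" "\<gamma> a = x" "\<gamma> b = y" using assms(1) reach_def by blast
  obtain \<delta> u' v' where h2: "horizontal_on b c \<delta> u' v'" "\<delta> b = y" "\<delta> c = z" using assms(2) reach_def by blast
  have ab: "a \<le> b" and bc: "b \<le> c" using h1 h2 by (auto simp: horizontal_on_def)
  show ?thesis unfolding reach_def
    using hor_glue(1)[OF h1(1) h2(1)] h1 h2 ab bc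
    by (intro exI[of _ "\<lambda>t. if t \<le> b then \<gamma> t else \<delta> t"] exI) auto
qed

lemma reach_seg2: assumes "x \<in> SU2" "a < b" shows "reach a b x (x ** exp_p2 \<theta>)"
proof -
  have "horizontal_on a b (\<lambda>t. x ** exp_p2 ((\<theta>/(b-a))*(t-a))) (\<lambda>t. 0) (\<lambda>t. \<theta>/(b-a))"
    using seg2[OF assms(1) less_imp_le[OF assms(2)], of "\<theta>/(b-a)"] by (simp add: mult.commute)
  then show ?thesis unfolding reach_def using assms by (intro exI) (auto simp: exp_p2_0)
qed

lemma reach_seg1: assumes "x \<in> SU2" "a < b" shows "reach a b x (x ** exp_p1 \<theta>)"
proof -
  have "horizontal_on a b (\<lambda>t. x ** exp_p1 ((\<theta>/(b-a))*(t-a))) (\<lambda>t. \<theta>/(b-a)) (\<lambda>t. 0)"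
    using seg1[OF assms(1) less_imp_le[OF assms(2)], of "\<theta>/(b-a)"] by (simp add: mult.commute)
  then show ?thesis unfolding reach_def using assms by (intro exI) (auto simp: exp_p1_0)
qed

lemma reach_to_id: assumes "x \<in> SU2" "a < b" shows "reach a b x (mat 1)"
proof -
  obtain \<alpha> \<beta> c where x: "x = exp_p2 (-\<beta>) ** exp_p1 \<alpha> ** exp_p2 c" using euler_exists[OF assms(1)] by blast
  define d where "d = (b - a) / 3"
  have d0: "0 < d" using assms by (simp add: d_def)
  have lt: "a + 2*d < b" using assms by (simp add: d_def field_simps)
  have x1: "x ** exp_p2 (-c) = exp_p2 (-\<beta>) ** exp_p1 \<alpha>"
    unfolding x by (simp add: massoc exp_p2_add exp_p2_0)
  have x2: "exp_p2 (-\<beta>) ** exp_p1 \<alpha> ** exp_p1 (-\<alpha>) = exp_p2 (-\<beta>)"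
    by (simp add: massoc exp_p1_add exp_p1_0)
  have x3: "exp_p2 (-\<beta>) ** exp_p2 \<beta> = mat 1" by (simp add: exp_p2_add exp_p2_0)
  have s1: "exp_p2 (-\<beta>) ** exp_p1 \<alpha> \<in> SU2" by (intro SU2_mult exp_p1_SU2 exp_p2_SU2)
  have r1: "reach a (a+d) x (exp_p2 (-\<beta>) ** exp_p1 \<alpha>)"
    using reach_seg2[OF assms(1), of a "a+d" "-c"] d0 x1 by simp
  have r2: "reach (a+d) (a+2*d) (exp_p2 (-\<beta>) ** exp_p1 \<alpha>) (exp_p2 (-\<beta>))"
    using reach_seg1[OF s1, of "a+d" "a+2*d" "-\<alpha>"] d0 x2 by simp
  have r3: "reach (a+2*d) b (exp_p2 (-\<beta>)) (mat 1)"
    using reach_seg2[OF exp_p2_SU2 lt, of "-\<beta>" \<beta>] x3 by simp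
  show ?thesis by (rule reach_trans[OF reach_trans[OF r1 r2] r3])
qed

lemma reach_from_id: assumes "y \<in> SU2" "a < b" shows "reach a b (mat 1) y"
proof -
  obtain \<alpha> \<beta> c where y: "y = exp_p2 (-\<beta>) ** exp_p1 \<alpha> ** exp_p2 c" using euler_exists[OF assms(1)] by blast
  define d where "d = (b - a) / 3"
  have d0: "0 < d" using assms by (simp add: d_def)
  have lt: "a + 2*d < b" using assms by (simp add: d_def field_simps)
  have s1: "exp_p2 (-\<beta>) ** exp_p1 \<alpha> \<in> SU2" by (intro SU2_mult exp_p1_SU2 exp_p2_SU2)
  have one: "mat 1 \<in> SU2" using exp_p2_SU2[of 0] by (simp add: exp_p2_0)
  have r1: "reach a (a+d) (mat 1) (exp_p2 (-\<beta>))"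
    using reach_seg2[OF one, of a "a+d" "-\<beta>"] d0 by simp
  have r2: "reach (a+d) (a+2*d) (exp_p2 (-\<beta>)) (exp_p2 (-\<beta>) ** exp_p1 \<alpha>)"
    using reach_seg1[OF exp_p2_SU2, of "a+d" "a+2*d" "-\<beta>" \<alpha>] d0 by simp
  have r3: "reach (a+2*d) b (exp_p2 (-\<beta>) ** exp_p1 \<alpha>) y"
    using reach_seg2[OF s1 lt, of c] y by simp
  show ?thesis by (rule reach_trans[OF reach_trans[OF r1 r2] r3])
qed

lemma connect: assumes "x \<in> SU2" "y \<in> SU2" shows "reach 0 1 x y"
  using reach_trans[OF reach_to_id[OF assms(1), of 0 "1/2"] reach_from_id[OF assms(2), of "1/2" 1]] by simp

lemma hlength_nonneg: "horizontal_on a b \<gamma> u v \<Longrightarrow> 0 \<le> hlength a b u v"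
  unfolding hlength_def by (rule integral_nonneg[OF hor_integrable]) auto

lemma proj: assumes "horizontal_on 0 1 \<gamma> u v" shows "quot_curve_len (\<lambda>t. cls (\<gamma> t)) (hlength 0 1 u v)"
  unfolding quot_curve_len_def
  apply (rule exI[of _ "1::nat"], rule exI[of _ "\<lambda>i::nat. if i = 0 then 0 else (1::real)"],
         rule exI[of _ "\<lambda>i::nat. \<gamma>"], rule exI[of _ "\<lambda>i::nat. u"], rule exI[of _ "\<lambda>i::nat. v"])
  using assms by simp

lemma lift:
  assumes q: "quot_curve_len \<sigma> len" and s0: "\<sigma> 0 = cls g" and s1: "\<sigma> 1 = cls h"
    and g: "g \<in> SU2" and g1: "g1 \<in> cls g"
  shows "\<exists>h1\<in>cls h. \<exists>\<gamma> u v. horizontal_on 0 1 \<gamma> u v \<and> \<gamma> 0 = g1 \<and> \<gamma> 1 = h1 \<and> hlength 0 1 u v = len"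
proof -
  obtain n ts \<gamma>s u1s u2s where n: "0 < n" and t0: "ts 0 = 0" and tn: "ts n = 1"
    and inc: "\<forall>i<n. ts i < ts (Suc i)"
    and pc: "\<forall>i<n. horizontal_on (ts i) (ts (Suc i)) (\<gamma>s i) (u1s i) (u2s i) \<and> (\<forall>t\<in>{ts i..ts (Suc i)}. cls (\<gamma>s i t) = \<sigma> t)"
    and len: "len = (\<Sum>i<n. hlength (ts i) (ts (Suc i)) (u1s i) (u2s i))"
    using q unfolding quot_curve_len_def by blast
  have g1s: "g1 \<in> SU2" using g1 cls_SU2 by blast
  have cg1: "cls g1 = cls g" using cls_eq[OF g g1] .
  have main: "\<exists>\<gamma> u v. horizontal_on 0 (ts m) \<gamma> u v \<and> \<gamma> 0 = g1 \<and> \<gamma> (ts m) \<in> SU2 \<and> cls (\<gamma> (ts m)) = \<sigma> (ts m)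
     \<and> hlength 0 (ts m) u v = (\<Sum>i<m. hlength (ts i) (ts (Suc i)) (u1s i) (u2s i))" if "m \<le> n" for m
    using that
  proof (induction m)
    case 0
    have "horizontal_on 0 0 (\<lambda>t. g1 ** exp_p2 (0*(t-0))) (\<lambda>t. 0) (\<lambda>t. 0)" by (rule seg2[OF g1s]) simp
    then show ?case using t0 g1s cg1 s0
      by (intro exI[of _ "\<lambda>t. g1 ** exp_p2 (0*(t-0))"] exI[of _ "\<lambda>t. 0"] exI[of _ "\<lambda>t. 0"])
         (simp add: exp_p2_0 hlength_const)
  next
    case (Suc m)
    then have mn: "m < n" by simp
    from Suc.IH mn obtain \<gamma> u v where h\<gamma>: "horizontal_on 0 (ts m) \<gamma> u v" and \<gamma>0: "\<gamma> 0 = g1"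
      and \<gamma>s: "\<gamma> (ts m) \<in> SU2" and \<gamma>c: "cls (\<gamma> (ts m)) = \<sigma> (ts m)"
      and \<gamma>l: "hlength 0 (ts m) u v = (\<Sum>i<m. hlength (ts i) (ts (Suc i)) (u1s i) (u2s i))"
      by auto
    have hp: "horizontal_on (ts m) (ts (Suc m)) (\<gamma>s m) (u1s m) (u2s m)"
      and cp: "\<forall>t\<in>{ts m..ts (Suc m)}. cls (\<gamma>s m t) = \<sigma> t" using pc mn by auto
    have lt: "ts m < ts (Suc m)" using inc mn by auto
    have ys: "\<gamma>s m (ts m) \<in> SU2" and ys2: "\<gamma>s m (ts (Suc m)) \<in> SU2"
      using hp lt unfolding horizontal_on_def by auto
    have "cls (\<gamma>s m (ts m)) = cls (\<gamma> (ts m))" using cp lt \<gamma>c by auto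
    then have "\<gamma> (ts m) \<in> cls (\<gamma>s m (ts m))" using cls_self[OF \<gamma>s] by simp
    then obtain k where xk: "\<gamma> (ts m) = \<gamma>s m (ts m) ** K k" using cls_iff[OF ys] by blast
    have h\<delta>: "horizontal_on (ts m) (ts (Suc m)) (\<lambda>t. \<gamma>s m t ** K k) (\<lambda>t. cos (of_int k * pi) * u1s m t) (u2s m)"
      by (rule hor_right(1)[OF hp])
    have l\<delta>: "hlength (ts m) (ts (Suc m)) (\<lambda>t. cos (of_int k * pi) * u1s m t) (u2s m) = hlength (ts m) (ts (Suc m)) (u1s m) (u2s m)"
      by (rule hor_right(2)[OF hp])
    have e: "\<gamma> (ts m) = (\<lambda>t. \<gamma>s m t ** K k) (ts m)" using xk by simp
    note G1 = hor_glue(1)[OF h\<gamma> h\<delta> e] and G2 = hor_glue(2)[OF h\<gamma> h\<delta> e]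
    have z0: "0 \<le> ts m" using h\<gamma> by (simp add: horizontal_on_def)
    have cc: "cls (\<gamma>s m (ts (Suc m)) ** K k) = \<sigma> (ts (Suc m))"
    proof -
      have "\<gamma>s m (ts (Suc m)) ** K k \<in> cls (\<gamma>s m (ts (Suc m)))" using cls_iff[OF ys2] by blast
      then have "cls (\<gamma>s m (ts (Suc m)) ** K k) = cls (\<gamma>s m (ts (Suc m)))" by (rule cls_eq[OF ys2])
      also have "\<dots> = \<sigma> (ts (Suc m))" using cp lt by auto
      finally show ?thesis .
    qed
    have ss: "\<gamma>s m (ts (Suc m)) ** K k \<in> SU2" using ys2 SU2_mult K_SU2 by blast
    show ?case
      apply (rule exI[of _ "\<lambda>t. if t \<le> ts m then \<gamma> t else \<gamma>s m t ** K k"])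
      apply (rule exI[of _ "\<lambda>t. if t \<le> ts m then u t else cos (of_int k * pi) * u1s m t"])
      apply (rule exI[of _ "\<lambda>t. if t \<le> ts m then v t else u2s m t"])
      using G1 G2 z0 \<gamma>0 lt cc ss \<gamma>l l\<delta> by simp
  qed
  from main[of n] obtain \<gamma> u v where h: "horizontal_on 0 1 \<gamma> u v" and \<gamma>0: "\<gamma> 0 = g1"
    and \<gamma>s: "\<gamma> 1 \<in> SU2" and \<gamma>c: "cls (\<gamma> 1) = cls h" and \<gamma>l: "hlength 0 1 u v = len"
    using tn s1 len by auto
  have "\<gamma> 1 \<in> cls h" using cls_self[OF \<gamma>s] \<gamma>c by simp
  then show ?thesis using h \<gamma>0 \<gamma>l by blast
qed

theorem proposition6:
  assumes "g \<in> SU2" and "h \<in> SU2" and "g1 \<in> cls g"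
  shows "(\<exists>h1\<in>cls h. quot_dist (cls g) (cls h) = sr_dist g1 h1) \<and>
         (\<forall>h1\<in>cls h. quot_dist (cls g) (cls h) \<le> sr_dist g1 h1)"
proof -
  define S where "S = {len | \<sigma> len. quot_curve_len \<sigma> len \<and> \<sigma> 0 = cls g \<and> \<sigma> 1 = cls h}"
  define T where "T h1 = {hlength 0 1 u1 u2 | \<gamma> u1 u2. horizontal_on 0 1 \<gamma> u1 u2 \<and> \<gamma> 0 = g1 \<and> \<gamma> 1 = h1}" for h1
  have qd: "quot_dist (cls g) (cls h) = Inf S" by (simp add: quot_dist_def S_def)
  have sd: "sr_dist g1 h1 = Inf (T h1)" for h1 by (simp add: sr_dist_def T_def)
  have g1s: "g1 \<in> SU2" using assms(3) cls_SU2 by blast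
  have cg1: "cls g1 = cls g" using cls_eq[OF assms(1,3)] .
  have Tne: "T h1 \<noteq> {}" if "h1 \<in> SU2" for h1
    using connect[OF g1s that] unfolding reach_def T_def by blast
  have Tbdd: "bdd_below (T h1)" for h1
    unfolding T_def bdd_below_def using hlength_nonneg by blast
  have ST: "\<exists>h1\<in>cls h. l \<in> T h1" if lS: "l \<in> S" for l
  proof -
    obtain \<sigma> where "quot_curve_len \<sigma> l" "\<sigma> 0 = cls g" "\<sigma> 1 = cls h" using lS unfolding S_def by blast
    from lift[OF this assms(1,3)] show ?thesis unfolding T_def by blast
  qed
  have Sbdd: "bdd_below S"
    unfolding bdd_below_def
  proof (intro exI ballI)
    fix l assume "l \<in> S"
    then obtain h1 where "l \<in> T h1" using ST by blast
    then show "0 \<le> l" unfolding T_def using hlength_nonneg by blast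
  qed
  have TS: "T h1 \<subseteq> S" if "h1 \<in> cls h" for h1
  proof
    fix l assume "l \<in> T h1"
    then obtain \<gamma> u v where hh: "horizontal_on 0 1 \<gamma> u v" "\<gamma> 0 = g1" "\<gamma> 1 = h1" "l = hlength 0 1 u v"
      unfolding T_def by blast
    have "cls h1 = cls h" using cls_eq[OF assms(2) that] .
    then show "l \<in> S" unfolding S_def using proj[OF hh(1)] hh cg1 by auto
  qed
  have fin: "finite (cls h)" by (rule cls_finite[OF assms(2)])
  have ne: "cls h \<noteq> {}" using cls_self[OF assms(2)] by blast
  define m where "m = Min ((\<lambda>h1. Inf (T h1)) ` cls h)"
  have "m \<in> (\<lambda>h1. Inf (T h1)) ` cls h" unfolding m_def using fin ne by (intro Min_in) auto
  then obtain hm where hm: "hm \<in> cls h" and mhm: "m = Inf (T hm)" by blast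
  have mle: "m \<le> Inf (T h1)" if "h1 \<in> cls h" for h1 unfolding m_def using fin that by (intro Min_le) auto
  have hms: "hm \<in> SU2" using hm cls_SU2 by blast
  have le: "Inf S \<le> Inf (T h1)" if "h1 \<in> cls h" for h1
    by (rule cInf_superset_mono[OF Tne[OF cls_SU2[OF that]] Sbdd TS[OF that]])
  have Sne: "S \<noteq> {}" using TS[OF hm] Tne[OF hms] by blast
  have ge: "m \<le> Inf S"
  proof (rule cInf_greatest[OF Sne])
    fix l assume "l \<in> S"
    then obtain h1 where h1: "h1 \<in> cls h" "l \<in> T h1" using ST by blast
    have "m \<le> Inf (T h1)" by (rule mle[OF h1(1)])
    also have "Inf (T h1) \<le> l" by (rule cInf_lower[OF h1(2) Tbdd])
    finally show "m \<le> l" .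
  qed
  have "Inf S = Inf (T hm)" using le[OF hm] ge mhm by simp
  then show ?thesis using hm le qd sd by auto
qed

end
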